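(* Let $k>0$ be real and let $\omega_1,\omega_2$ be the two roots of $x^2+x+1$. Put $A=\omega_1k-1$ and $B=\omega_2k-1$. Then for every integer $n\ge1$, $$J_{-n}=\frac{1}{k^2+k+1}\left[k\left(\frac1k\right)^n+\frac{B\omega_1^n-A\omega_2^n}{\omega_1-\omega_2}\right].$$
   Context: For real $k>0$, the third-order $k$-Jacobsthal sequence $(J_n)=(J_n^{(3)}(k))$ is defined by $J_0=0$, $J_1=1$, $J_2=k-1$ and $J_{n+3}=(k-1)J_{n+2}+(k-1)J_{n+1}+kJ_n$, and extended to negative indices by the backward recurrence $J_{-n}=\frac{1-k}{k}J_{-(n-1)}+\frac{1-k}{k}J_{-(n-2)}+\frac{1}{k}J_{-(n-3)}$ for $n\ge1$. *)

theory Defs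
  imports Complex_Main
begin

fun Jpos :: "real \<Rightarrow> nat \<Rightarrow> real" where
  "Jpos k 0 = 0"
| "Jpos k (Suc 0) = 1"
| "Jpos k (Suc (Suc 0)) = k - 1"
| "Jpos k (Suc (Suc (Suc n))) =
     (k - 1) * Jpos k (Suc (Suc n)) + (k - 1) * Jpos k (Suc n) + k * Jpos k n"

fun Jneg :: "real \<Rightarrow> nat \<Rightarrow> real" where
  "Jneg k 0 = 0"
| "Jneg k (Suc 0) =
     (1 - k) / k * Jpos k 0 + (1 - k) / k * Jpos k 1 + 1 / k * Jpos k 2"
| "Jneg k (Suc (Suc 0)) =
     (1 - k) / k * Jneg k 1 + (1 - k) / k * Jpos k 0 + 1 / k * Jpos k 1"
| "Jneg k (Suc (Suc (Suc n))) =
     (1 - k) / k * Jneg k (Suc (Suc n)) + (1 - k) / k * Jneg k (Suc n) + 1 / k * Jneg k n"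

definition Jac3 :: "real \<Rightarrow> int \<Rightarrow> real" where
  "Jac3 k i = (if 0 \<le> i then Jpos k (nat i) else Jneg k (nat (- i)))"

end

theory Submission
  imports Defs
begin

lemma root_rec:
  fixes K w :: complex
  assumes "K \<noteq> 0" and "(K*w - 1) * (w^2 + w + 1) = 0"
  shows "w^(n+3) = (1-K)/K * w^(n+2) + (1-K)/K * w^(n+1) + 1/K * w^n"
proof -
  have "K * w^3 + (K-1)*w^2 + (K-1)*w - 1 = 0"
    using assms(2) by (simp add: algebra_simps power2_eq_square power3_eq_cube)
  hence "w^n * (K * w^3 + (K-1)*w^2 + (K-1)*w - 1) = 0" by simp
  hence "K * w^(n+3) = (1-K) * w^(n+2) + (1-K) * w^(n+1) + w^n"
    by (simp add: algebra_simps power_add power2_eq_square)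
  moreover have "K*((1-K)/K*a + (1-K)/K*b + 1/K*c) = (1-K)*a+(1-K)*b+c" for a b c
    using assms(1) by (simp add: field_simps)
  ultimately have "K * w^(n+3) = K * ((1-K)/K * w^(n+2) + (1-K)/K * w^(n+1) + 1/K * w^n)"
    by simp
  thus ?thesis using assms(1) by simp
qed

theorem mainTheorem9:
  fixes k :: real and w1 w2 :: complex and n :: nat
  assumes "k > 0"
    and "w1 \<noteq> w2"
    and "w1\<^sup>2 + w1 + 1 = 0"
    and "w2\<^sup>2 + w2 + 1 = 0"
    and "n \<ge> 1"
  shows "complex_of_real (Jac3 k (- int n)) =
    1 / (of_real k ^ 2 + of_real k + 1) *
      (of_real k * (1 / of_real k) ^ n +
       ((w2 * of_real k - 1) * w1 ^ n - (w1 * of_real k - 1) * w2 ^ n) / (w1 - w2))"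
proof -
  define K where "K = complex_of_real k"
  have K0: "K \<noteq> 0" using assms(1) by (simp add: K_def)
  have "k^2 + k + 1 > 0" using assms(1) by (simp add: add_pos_pos)
  hence D0: "K^2 + K + 1 \<noteq> 0" unfolding K_def
    by (metis (mono_tags, opaque_lifting) less_irrefl of_real_1 of_real_add of_real_eq_0_iff of_real_power)
  define D where "D = K^2 + K + 1"
  define c where "c = K / D"
  define d1 where "d1 = (w2*K - 1) / (D * (w1 - w2))"
  define d2 where "d2 = - (w1*K - 1) / (D * (w1 - w2))"
  define F where "F m = c * (1/K)^m + d1 * w1^m + d2 * w2^m" for m
  have Feq: "F m = 1 / D * (K * (1/K)^m + ((w2*K - 1) * w1^m - (w1*K - 1) * w2^m) / (w1 - w2))" for m
  proof -
    have "D \<noteq> 0" using D0 D_def by simp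
    moreover have "w1 - w2 \<noteq> 0" using assms(2) by simp
    ultimately have "1/D * (K*p + (a*x - b*y)/e) = K/D*p + a/(D*e)*x + (-b)/(D*e)*y"
      if "e = w1 - w2" for p a x b y e using that
      by (simp add: diff_divide_distrib add_divide_distrib distrib_left mult.commute)
    from this[of "w1 - w2" "(1/K)^m" "w2*K - 1" "w1^m" "w1*K - 1" "w2^m"]
    show ?thesis unfolding F_def c_def d1_def d2_def by simp
  qed
  have r0: "(1/K)^(m+3) = (1-K)/K * (1/K)^(m+2) + (1-K)/K * (1/K)^(m+1) + 1/K * (1/K)^m" for m
    using K0 by (intro root_rec) auto
  have r1: "w1^(m+3) = (1-K)/K * w1^(m+2) + (1-K)/K * w1^(m+1) + 1/K * w1^m" for m
    using K0 assms(3) by (intro root_rec) auto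
  have r2: "w2^(m+3) = (1-K)/K * w2^(m+2) + (1-K)/K * w2^(m+1) + 1/K * w2^m" for m
    using K0 assms(4) by (intro root_rec) auto
  have Frec: "F (m+3) = (1-K)/K * F (m+2) + (1-K)/K * F (m+1) + 1/K * F m" for m
    unfolding F_def r0 r1 r2 by (simp add: algebra_simps)
  have w1c: "w1^3 = 1"
  proof -
    have "w1^3 - 1 = (w1 - 1) * (w1^2 + w1 + 1)" by (simp add: algebra_simps power2_eq_square power3_eq_cube)
    thus ?thesis using assms(3) by simp
  qed
  have w2c: "w2^3 = 1"
  proof -
    have "w2^3 - 1 = (w2 - 1) * (w2^2 + w2 + 1)" by (simp add: algebra_simps power2_eq_square power3_eq_cube)
    thus ?thesis using assms(4) by simp
  qed
  have prod: "w1 * w2 = 1" and sum: "w1 + w2 = -1"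
  proof -
    have "(w1 - w2) * (w1 + w2 + 1) = (w1^2 + w1 + 1) - (w2^2 + w2 + 1)"
      by (simp add: algebra_simps power2_eq_square)
    hence "(w1 - w2) * (w1 + w2 + 1) = 0" using assms(3,4) by simp
    hence "w1 + w2 + 1 = 0" using assms(2) by simp
    thus s: "w1 + w2 = -1" by (metis add.commute add_diff_cancel_left' diff_0 diff_add_eq)
    have "w1*w2 = w1*(w1+w2) - (w1^2+w1+1) + w1 + 1" by (simp add: algebra_simps power2_eq_square)
    thus "w1 * w2 = 1" using assms(3) s by simp
  qed
  have F1: "F 1 = 0"
  proof -
    have "(w2*K - 1) * w1 - (w1*K - 1) * w2 = -(w1 - w2)" by (simp add: algebra_simps)
    hence "((w2*K - 1) * w1^1 - (w1*K - 1) * w2^1) / (w1 - w2) = -1" using assms(2) by (simp add: divide_eq_eq)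
    thus ?thesis unfolding Feq using K0 by simp
  qed
  have F2: "F 2 = 1/K"
  proof -
    have "(w2*K - 1) * w1^2 - (w1*K - 1) * w2^2 = (w1 - w2) * (K * (w1*w2) - (w1 + w2))"
      by (simp add: algebra_simps power2_eq_square)
    hence "((w2*K - 1) * w1^2 - (w1*K - 1) * w2^2) / (w1 - w2) = K + 1" using assms(2) prod sum by simp
    thus ?thesis unfolding Feq using K0 D0 by (simp add: D_def field_simps power2_eq_square)
  qed
  have F3: "F 3 = (1-K)/K^2"
  proof -
    have "((w2*K - 1) * w1^3 - (w1*K - 1) * w2^3) / (w1 - w2) = -K"
      using assms(2) w1c w2c by (simp add: field_simps)
    moreover have "K * (1/K)^3 + (-K) = (1-K)*(K^2+K+1)/K^2" using K0
      by (simp add: field_simps power2_eq_square power3_eq_cube)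
    ultimately show ?thesis unfolding Feq using K0 D0
      by (simp add: D_def)
  qed
  have J1: "Jneg k 1 = 0" using assms(1) by (simp add: field_simps numeral_2_eq_2)
  have J2: "Jneg k 2 = 1/k" using assms(1) J1 by (simp add: numeral_2_eq_2)
  have J3: "Jneg k 3 = (1-k)/k^2" using assms(1) J1 J2
    by (simp add: numeral_3_eq_3 numeral_2_eq_2 power2_eq_square)
  have main: "complex_of_real (Jneg k m) = F m \<and> complex_of_real (Jneg k (m+1)) = F (m+1)
      \<and> complex_of_real (Jneg k (m+2)) = F (m+2)" if "m \<ge> 1" for m
    using that
  proof (induction m rule: dec_induct)
    case base
    have e2: "(1::nat) + 1 = 2" and e3: "(1::nat) + 2 = 3" by simp_all
    show ?case unfolding e2 e3 using J1 J2 J3 F1 F2 F3 by (simp only: K_def of_real_0 of_real_divide of_real_1 of_real_diff of_real_power)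
  next
    case (step m)
    obtain j where j: "m = Suc j" using step.hyps(1) by (cases m) auto
    have "Jneg k (m+3) = (1 - k) / k * Jneg k (m+2) + (1 - k) / k * Jneg k (m+1) + 1 / k * Jneg k m"
      by (simp add: numeral_3_eq_3 numeral_2_eq_2)
    hence "complex_of_real (Jneg k (m+3)) = (1-K)/K * F (m+2) + (1-K)/K * F (m+1) + 1/K * F m"
      using step.IH by (simp add: K_def)
    also have "\<dots> = F (m+3)" using Frec by simp
    finally show ?case using step.IH by (simp add: numeral_3_eq_3 numeral_2_eq_2)
  qed
  have "Jac3 k (- int n) = Jneg k n" using assms(5) by (simp add: Jac3_def)
  hence "complex_of_real (Jac3 k (- int n)) = F n" using main[OF assms(5)] by simp
  thus ?thesis unfolding Feq D_def K_def .
qed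

end
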